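(* Consider a discounted MDP with finite state space $\mathcal{S}$, finite action space $\mathcal{A}$, reward vector $r\in\mathbb{R}^{|\mathcal{S}||\mathcal{A}|}$, transition matrix $P\in\mathbb{R}_+^{|\mathcal{S}||\mathcal{A}|\times|\mathcal{S}|}$ with $P_{sa,\tilde s}=\Pr(\tilde s\mid s,a)$, initial state distribution $\mu_0$, and discount factor $\gamma\in[0,1)$. Let $\theta\mapsto\pi_\theta$ be a differentiable parametrized policy, and let $q_\phi\in\mathbb{R}^{|\mathcal{S}||\mathcal{A}|}$ be an arbitrary critic vector (not depending on $\theta$). Define $J(\theta)=(1-\gamma)\mu_0^\top\Pi_\theta q_\theta$, $J_\pi(\theta,\phi)=(1-\gamma)\mu_0^\top\Pi_\theta q_\phi$, the critic residual $\delta_{\theta,\phi}=r-(I-\gamma P\Pi_\theta)q_\phi$, and $\nabla^\phi_\theta J=\sum_s d_{\mathcal{S},\theta}(s)\sum_a q_\phi(s,a)\nabla_\theta\pi_\theta(s,a)$. Then $$\nabla_\theta J-\partial_\theta J_\pi=\nabla_\theta\Big(\sum_{s,a} d_\theta(s,a)\,\delta_{\theta,\phi}(s,a)\Big),$$ where the derivative on the right acts on both $d_\theta$ and $\delta_{\theta,\phi}$ (with $q_\phi$ fixed), and $$\nabla_\theta J-\nabla^\phi_\theta J=\sum_{s,a}\nabla_\theta d_\theta(s,a)\,\delta_{\theta,\phi}(s,a),$$ i.e. the derivative of $\mathbb{E}_{(S,A)\sim d_\theta}[\delta_{\theta,\phi}(S,A)]$ taken only through $d_\theta$, with $\delta_{\theta,\phi}$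 held fixed.
   Context: The policy $\pi_\theta$ is a vector in $\mathbb{R}_+^{|\mathcal{S}||\mathcal{A}|}$ with entries $\pi_\theta(s,a)$, normalized in each state. $\Pi_\theta\in\mathbb{R}^{|\mathcal{S}|\times|\mathcal{S}||\mathcal{A}|}$ is the block-diagonal matrix whose row $s$ contains $\pi_\theta(s,\cdot)^\top$ in the block of state $s$ and zeros elsewhere, so $(\Pi_\theta v)(s)=\sum_a\pi_\theta(s,a)v(s,a)$. $q_\theta=\sum_{i\ge0}(\gamma P\Pi_\theta)^i r$ is the state-action value function of $\pi_\theta$. $d_\theta(s,a)=(1-\gamma)\sum_{i\ge0}\gamma^i\Pr(S_i=s,A_i=a)$ is the discounted state-action visitation distribution when $S_0\sim\mu_0$, actions follow $\pi_\theta$ and transitions follow $P$; $d_{\mathcal{S},\theta}(s)=\sum_a d_\theta(s,a)$. $\partial_\theta J_\pi$ denotes the gradient of $J_\pi$ in $\theta$ with $q_\phi$ held fixed. *)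

theory Defs
  imports "HOL-Analysis.Analysis"
begin

text \<open>Vectors in R^{|S||A|} are functions 's \<Rightarrow> 'a \<Rightarrow> real.
  P s a s' = Pr(s' | s, a).\<close>

definition is_mdp :: "('s::finite \<Rightarrow> 'a::finite \<Rightarrow> 's \<Rightarrow> real) \<Rightarrow> ('s \<Rightarrow> real) \<Rightarrow> real \<Rightarrow> bool" where
  "is_mdp P mu0 \<gamma> \<longleftrightarrow>
     (\<forall>s a s'. P s a s' \<ge> 0) \<and> (\<forall>s a. (\<Sum>s'\<in>UNIV. P s a s') = 1) \<and>
     (\<forall>s. mu0 s \<ge> 0) \<and> (\<Sum>s\<in>UNIV. mu0 s) = 1 \<and> 0 \<le> \<gamma> \<and> \<gamma> < 1"

definition is_policy :: "('s::finite \<Rightarrow> 'a::finite \<Rightarrow> real) \<Rightarrow> bool" where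
  "is_policy p \<longleftrightarrow> (\<forall>s a. p s a \<ge> 0) \<and> (\<forall>s. (\<Sum>a\<in>UNIV. p s a) = 1)"

definition PiOp :: "('s::finite \<Rightarrow> 'a::finite \<Rightarrow> real) \<Rightarrow> ('s \<Rightarrow> 'a \<Rightarrow> real) \<Rightarrow> 's \<Rightarrow> real" where
  "PiOp p v s = (\<Sum>a\<in>UNIV. p s a * v s a)"

definition PPiOp :: "('s::finite \<Rightarrow> 'a::finite \<Rightarrow> 's \<Rightarrow> real) \<Rightarrow> ('s \<Rightarrow> 'a \<Rightarrow> real)
     \<Rightarrow> ('s \<Rightarrow> 'a \<Rightarrow> real) \<Rightarrow> 's \<Rightarrow> 'a \<Rightarrow> real" where
  "PPiOp P p v s a = (\<Sum>s'\<in>UNIV. P s a s' * PiOp p v s')"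

definition qfun :: "('s::finite \<Rightarrow> 'a::finite \<Rightarrow> 's \<Rightarrow> real) \<Rightarrow> real \<Rightarrow> ('s \<Rightarrow> 'a \<Rightarrow> real)
     \<Rightarrow> ('s \<Rightarrow> 'a \<Rightarrow> real) \<Rightarrow> 's \<Rightarrow> 'a \<Rightarrow> real" where
  "qfun P \<gamma> r p s a = (\<Sum>i. \<gamma> ^ i * ((PPiOp P p) ^^ i) r s a)"

text \<open>Pr(S_i = s) under initial distribution mu0, policy p, transitions P.\<close>
fun state_dist :: "('s::finite \<Rightarrow> 'a::finite \<Rightarrow> 's \<Rightarrow> real) \<Rightarrow> ('s \<Rightarrow> real)
     \<Rightarrow> ('s \<Rightarrow> 'a \<Rightarrow> real) \<Rightarrow> nat \<Rightarrow> 's \<Rightarrow> real" where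
  "state_dist P mu0 p 0 s = mu0 s"
| "state_dist P mu0 p (Suc i) s' = (\<Sum>s\<in>UNIV. \<Sum>a\<in>UNIV. state_dist P mu0 p i s * p s a * P s a s')"

definition dvisit :: "('s::finite \<Rightarrow> 'a::finite \<Rightarrow> 's \<Rightarrow> real) \<Rightarrow> ('s \<Rightarrow> real) \<Rightarrow> real
     \<Rightarrow> ('s \<Rightarrow> 'a \<Rightarrow> real) \<Rightarrow> 's \<Rightarrow> 'a \<Rightarrow> real" where
  "dvisit P mu0 \<gamma> p s a = (1 - \<gamma>) * (\<Sum>i. \<gamma> ^ i * (state_dist P mu0 p i s * p s a))"

definition dSvisit :: "('s::finite \<Rightarrow> 'a::finite \<Rightarrow> 's \<Rightarrow> real) \<Rightarrow> ('s \<Rightarrow> real) \<Rightarrow> real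
     \<Rightarrow> ('s \<Rightarrow> 'a \<Rightarrow> real) \<Rightarrow> 's \<Rightarrow> real" where
  "dSvisit P mu0 \<gamma> p s = (\<Sum>a\<in>UNIV. dvisit P mu0 \<gamma> p s a)"

definition Jobj :: "('s::finite \<Rightarrow> 'a::finite \<Rightarrow> 's \<Rightarrow> real) \<Rightarrow> ('s \<Rightarrow> real) \<Rightarrow> real
     \<Rightarrow> ('s \<Rightarrow> 'a \<Rightarrow> real) \<Rightarrow> ('s \<Rightarrow> 'a \<Rightarrow> real) \<Rightarrow> real" where
  "Jobj P mu0 \<gamma> r p = (1 - \<gamma>) * (\<Sum>s\<in>UNIV. mu0 s * PiOp p (qfun P \<gamma> r p) s)"

definition Jpi :: "('s::finite \<Rightarrow> real) \<Rightarrow> real \<Rightarrow> ('s \<Rightarrow> 'a::finite \<Rightarrow> real)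
     \<Rightarrow> ('s \<Rightarrow> 'a \<Rightarrow> real) \<Rightarrow> real" where
  "Jpi mu0 \<gamma> p qphi = (1 - \<gamma>) * (\<Sum>s\<in>UNIV. mu0 s * PiOp p qphi s)"

definition residual :: "('s::finite \<Rightarrow> 'a::finite \<Rightarrow> 's \<Rightarrow> real) \<Rightarrow> real \<Rightarrow> ('s \<Rightarrow> 'a \<Rightarrow> real)
     \<Rightarrow> ('s \<Rightarrow> 'a \<Rightarrow> real) \<Rightarrow> ('s \<Rightarrow> 'a \<Rightarrow> real) \<Rightarrow> 's \<Rightarrow> 'a \<Rightarrow> real" where
  "residual P \<gamma> r p qphi s a = r s a - (qphi s a - \<gamma> * PPiOp P p qphi s a)"

end

theory Submission
  imports Defs
begin


definition Vf :: "('s::finite \<Rightarrow> 'a::finite \<Rightarrow> 's \<Rightarrow> real) \<Rightarrow> ('s \<Rightarrow> real) \<Rightarrow> real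
     \<Rightarrow> ('s \<Rightarrow> 'a \<Rightarrow> real) \<Rightarrow> 's \<Rightarrow> real" where
  "Vf P mu0 \<gamma> p s = (\<Sum>i. \<gamma> ^ i * state_dist P mu0 p i s)"

lemma sd_nonneg:
  assumes "is_mdp P mu0 \<gamma>" "is_policy p"
  shows "0 \<le> state_dist P mu0 p i s"
  using assms
  by (induction i arbitrary: s) (auto simp: is_mdp_def is_policy_def intro!: sum_nonneg)

lemma sd_sum:
  assumes "is_mdp P mu0 \<gamma>" "is_policy p"
  shows "(\<Sum>s\<in>UNIV. state_dist P mu0 p i s) = 1"
proof (induction i)
  case 0
  then show ?case using assms by (simp add: is_mdp_def)
next
  case (Suc i)
  have "(\<Sum>s'\<in>UNIV. state_dist P mu0 p (Suc i) s')
      = (\<Sum>s\<in>UNIV. \<Sum>a\<in>UNIV. \<Sum>s'\<in>UNIV. state_dist P mu0 p i s * p s a * P s a s')"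
    unfolding state_dist.simps by (subst sum.swap, rule sum.cong[OF refl], rule sum.swap)
  also have "\<dots> = (\<Sum>s\<in>UNIV. \<Sum>a\<in>UNIV. state_dist P mu0 p i s * p s a)"
    using assms by (simp add: is_mdp_def flip: sum_distrib_left)
  also have "\<dots> = (\<Sum>s\<in>UNIV. state_dist P mu0 p i s)"
    using assms by (simp add: is_policy_def flip: sum_distrib_left)
  finally show ?case using Suc by simp
qed

lemma sd_le1:
  assumes "is_mdp P mu0 \<gamma>" "is_policy p"
  shows "state_dist P mu0 p i s \<le> 1"
proof -
  have "state_dist P mu0 p i s \<le> (\<Sum>s\<in>UNIV. state_dist P mu0 p i s)"
    by (rule member_le_sum) (auto intro: sd_nonneg[OF assms])
  then show ?thesis using sd_sum[OF assms] by simp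
qed

lemma sd_summable:
  assumes "is_mdp P mu0 \<gamma>" "is_policy p"
  shows "summable (\<lambda>i. \<gamma> ^ i * state_dist P mu0 p i s)"
proof (rule summable_comparison_test[of _ "\<lambda>i. \<gamma> ^ i"])
  have g: "0 \<le> \<gamma>" "\<gamma> < 1" using assms by (auto simp: is_mdp_def)
  show "\<exists>N. \<forall>n\<ge>N. norm (\<gamma> ^ n * state_dist P mu0 p n s) \<le> \<gamma> ^ n"
    using g sd_nonneg[OF assms] sd_le1[OF assms]
    by (auto simp: abs_mult intro!: mult_left_le)
  show "summable (\<lambda>i. \<gamma> ^ i)" using g by simp
qed

lemma dvisit_Vf:
  assumes "is_mdp P mu0 \<gamma>" "is_policy p"
  shows "dvisit P mu0 \<gamma> p s a = (1 - \<gamma>) * Vf P mu0 \<gamma> p s * p s a"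
proof -
  have "(\<Sum>i. \<gamma> ^ i * (state_dist P mu0 p i s * p s a)) = Vf P mu0 \<gamma> p s * p s a"
    unfolding Vf_def using suminf_mult2[OF sd_summable[OF assms], of s "p s a"]
    by (simp add: mult.assoc)
  then show ?thesis by (simp add: dvisit_def)
qed

lemma Vf_eq:
  assumes "is_mdp P mu0 \<gamma>" "is_policy p"
  shows "Vf P mu0 \<gamma> p s' = mu0 s' + \<gamma> * (\<Sum>s\<in>UNIV. \<Sum>a\<in>UNIV. Vf P mu0 \<gamma> p s * p s a * P s a s')"
proof -
  let ?f = "\<lambda>i. \<gamma> ^ i * state_dist P mu0 p i s'"
  have "(\<Sum>n. ?f (Suc n)) = Vf P mu0 \<gamma> p s' - mu0 s'"
    using suminf_split_head[OF sd_summable[OF assms, of s']] by (simp add: Vf_def)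
  moreover have "(\<Sum>n. ?f (Suc n)) = \<gamma> * (\<Sum>s\<in>UNIV. \<Sum>a\<in>UNIV. Vf P mu0 \<gamma> p s * p s a * P s a s')"
  proof -
    have "(\<Sum>n. ?f (Suc n)) = (\<Sum>n. \<gamma> * (\<Sum>s\<in>UNIV. \<Sum>a\<in>UNIV. (\<gamma> ^ n * state_dist P mu0 p n s) * (p s a * P s a s')))"
      by (simp add: sum_distrib_left mult_ac)
    also have "\<dots> = \<gamma> * (\<Sum>n. (\<Sum>s\<in>UNIV. \<Sum>a\<in>UNIV. (\<gamma> ^ n * state_dist P mu0 p n s) * (p s a * P s a s')))"
      by (intro suminf_mult summable_sum summable_mult2 sd_summable[OF assms])
    also have "(\<Sum>n. (\<Sum>s\<in>UNIV. \<Sum>a\<in>UNIV. (\<gamma> ^ n * state_dist P mu0 p n s) * (p s a * P s a s')))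
       = (\<Sum>s\<in>UNIV. \<Sum>n. \<Sum>a\<in>UNIV. (\<gamma> ^ n * state_dist P mu0 p n s) * (p s a * P s a s'))"
      by (intro suminf_sum summable_sum summable_mult2 sd_summable[OF assms])
    also have "\<dots> = (\<Sum>s\<in>UNIV. \<Sum>a\<in>UNIV. \<Sum>n. (\<gamma> ^ n * state_dist P mu0 p n s) * (p s a * P s a s'))"
      by (intro sum.cong refl suminf_sum summable_sum summable_mult2 sd_summable[OF assms])
    also have "\<dots> = (\<Sum>s\<in>UNIV. \<Sum>a\<in>UNIV. Vf P mu0 \<gamma> p s * p s a * P s a s')"
      unfolding Vf_def
      by (intro sum.cong refl) (subst suminf_mult2[OF sd_summable[OF assms], symmetric], simp add: Vf_def mult.assoc)
    finally show ?thesis .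
  qed
  ultimately show ?thesis by simp
qed

lemma T_bound:
  assumes "is_mdp P mu0 \<gamma>" "is_policy p" "\<And>s a. \<bar>f s a\<bar> \<le> B"
  shows "\<bar>PPiOp P p f s a\<bar> \<le> B"
proof -
  have pib: "\<bar>PiOp p f s'\<bar> \<le> B" for s'
  proof -
    have "\<bar>PiOp p f s'\<bar> \<le> (\<Sum>a\<in>UNIV. \<bar>p s' a * f s' a\<bar>)"
      unfolding PiOp_def by (rule sum_abs)
    also have "\<dots> \<le> (\<Sum>a\<in>UNIV. p s' a * B)"
      using assms by (intro sum_mono) (auto simp: abs_mult is_policy_def intro: mult_left_mono)
    also have "\<dots> = B" using assms(2) by (simp add: is_policy_def flip: sum_distrib_right)
    finally show ?thesis .
  qed
  have "\<bar>PPiOp P p f s a\<bar> \<le> (\<Sum>s'\<in>UNIV. \<bar>P s a s' * PiOp p f s'\<bar>)"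
    unfolding PPiOp_def by (rule sum_abs)
  also have "\<dots> \<le> (\<Sum>s'\<in>UNIV. P s a s' * B)"
    using assms pib by (intro sum_mono) (auto simp: abs_mult is_mdp_def intro: mult_left_mono)
  also have "\<dots> = B" using assms(1) by (simp add: is_mdp_def flip: sum_distrib_right)
  finally show ?thesis .
qed

lemma Titer_bound:
  assumes "is_mdp P mu0 \<gamma>" "is_policy p"
  shows "\<bar>((PPiOp P p) ^^ i) r s a\<bar> \<le> (\<Sum>s\<in>UNIV. \<Sum>a\<in>UNIV. \<bar>r s a\<bar>)"
proof (induction i arbitrary: s a)
  case 0
  have "\<bar>r s a\<bar> \<le> (\<Sum>a\<in>UNIV. \<bar>r s a\<bar>)" by (rule member_le_sum) auto
  also have "\<dots> \<le> (\<Sum>s\<in>UNIV. \<Sum>a\<in>UNIV. \<bar>r s a\<bar>)"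
    by (rule member_le_sum[of _ _ "\<lambda>s. \<Sum>a\<in>UNIV. \<bar>r s a\<bar>"]) (auto intro: sum_nonneg)
  finally show ?case by simp
next
  case (Suc i)
  then show ?case by (simp add: T_bound[OF assms])
qed

lemma q_summable:
  assumes "is_mdp P mu0 \<gamma>" "is_policy p"
  shows "summable (\<lambda>i. \<gamma> ^ i * ((PPiOp P p) ^^ i) r s a)"
proof (rule summable_comparison_test[of _ "\<lambda>i. (\<Sum>s\<in>UNIV. \<Sum>a\<in>UNIV. \<bar>r s a\<bar>) * \<gamma> ^ i"])
  have g: "0 \<le> \<gamma>" "\<gamma> < 1" using assms by (auto simp: is_mdp_def)
  show "\<exists>N. \<forall>n\<ge>N. norm (\<gamma> ^ n * ((PPiOp P p) ^^ n) r s a) \<le> (\<Sum>s\<in>UNIV. \<Sum>a\<in>UNIV. \<bar>r s a\<bar>) * \<gamma> ^ n"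
    using g Titer_bound[OF assms]
    by (auto simp: abs_mult mult.commute intro!: mult_left_mono)
  show "summable (\<lambda>i. (\<Sum>s\<in>UNIV. \<Sum>a\<in>UNIV. \<bar>r s a\<bar>) * \<gamma> ^ i)" using g by simp
qed

lemma q_bellman:
  assumes "is_mdp P mu0 \<gamma>" "is_policy p"
  shows "qfun P \<gamma> r p s a = r s a + \<gamma> * PPiOp P p (qfun P \<gamma> r p) s a"
proof -
  let ?g = "\<lambda>n s a. \<gamma> ^ n * ((PPiOp P p) ^^ n) r s a"
  have "(\<Sum>n. ?g (Suc n) s a) = qfun P \<gamma> r p s a - r s a"
    using suminf_split_head[OF q_summable[OF assms, of r s a]] by (simp add: qfun_def)
  moreover have "(\<Sum>n. ?g (Suc n) s a) = \<gamma> * PPiOp P p (qfun P \<gamma> r p) s a"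
  proof -
    have "(\<Sum>n. ?g (Suc n) s a) = (\<Sum>n. \<gamma> * (\<Sum>s'\<in>UNIV. \<Sum>a'\<in>UNIV. ?g n s' a' * (P s a s' * p s' a')))"
      by (simp add: PPiOp_def PiOp_def sum_distrib_left mult_ac)
    also have "\<dots> = \<gamma> * (\<Sum>n. (\<Sum>s'\<in>UNIV. \<Sum>a'\<in>UNIV. ?g n s' a' * (P s a s' * p s' a')))"
      by (intro suminf_mult summable_sum summable_mult2 q_summable[OF assms])
    also have "(\<Sum>n. (\<Sum>s'\<in>UNIV. \<Sum>a'\<in>UNIV. ?g n s' a' * (P s a s' * p s' a')))
       = (\<Sum>s'\<in>UNIV. \<Sum>n. \<Sum>a'\<in>UNIV. ?g n s' a' * (P s a s' * p s' a'))"
      by (intro suminf_sum summable_sum summable_mult2 q_summable[OF assms])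
    also have "\<dots> = (\<Sum>s'\<in>UNIV. \<Sum>a'\<in>UNIV. \<Sum>n. ?g n s' a' * (P s a s' * p s' a'))"
      by (intro sum.cong refl suminf_sum summable_sum summable_mult2 q_summable[OF assms])
    also have "\<dots> = (\<Sum>s'\<in>UNIV. \<Sum>a'\<in>UNIV. qfun P \<gamma> r p s' a' * (P s a s' * p s' a'))"
      unfolding qfun_def
      by (intro sum.cong refl) (subst suminf_mult2[OF q_summable[OF assms], symmetric], simp)
    also have "\<dots> = PPiOp P p (qfun P \<gamma> r p) s a"
      by (simp add: PPiOp_def PiOp_def sum_distrib_left mult_ac)
    finally show ?thesis by simp
  qed
  ultimately show ?thesis by simp
qed

lemma swap3: "(\<Sum>x\<in>A. \<Sum>y\<in>B. \<Sum>z\<in>C. f x y z) = (\<Sum>z\<in>C. \<Sum>x\<in>A. \<Sum>y\<in>B. f x y z)"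
  by (subst (2) sum.swap, rule sum.cong[OF refl], rule sum.swap)

lemma key_identity:
  assumes "is_mdp P mu0 \<gamma>" "is_policy p"
  shows "(\<Sum>s\<in>UNIV. Vf P mu0 \<gamma> p s * PiOp p f s) - \<gamma> * (\<Sum>s\<in>UNIV. Vf P mu0 \<gamma> p s * PiOp p (PPiOp P p f) s)
     = (\<Sum>s\<in>UNIV. mu0 s * PiOp p f s)"
proof -
  let ?V = "Vf P mu0 \<gamma> p"
  have "\<gamma> * (\<Sum>s\<in>UNIV. ?V s * PiOp p (PPiOp P p f) s)
     = (\<Sum>s\<in>UNIV. \<Sum>a\<in>UNIV. \<Sum>s'\<in>UNIV. \<gamma> * ?V s * p s a * P s a s' * PiOp p f s')"
    unfolding PiOp_def[of p "PPiOp P p f"] PPiOp_def by (simp add: sum_distrib_left mult_ac)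
  also have "\<dots> = (\<Sum>s'\<in>UNIV. \<Sum>s\<in>UNIV. \<Sum>a\<in>UNIV. \<gamma> * ?V s * p s a * P s a s' * PiOp p f s')"
    by (rule swap3)
  also have "\<dots> = (\<Sum>s'\<in>UNIV. (\<gamma> * (\<Sum>s\<in>UNIV. \<Sum>a\<in>UNIV. ?V s * p s a * P s a s')) * PiOp p f s')"
    by (simp add: sum_distrib_left sum_distrib_right mult_ac)
  also have "\<dots> = (\<Sum>s'\<in>UNIV. (?V s' - mu0 s') * PiOp p f s')"
  proof (intro sum.cong refl)
    fix s'
    show "(\<gamma> * (\<Sum>s\<in>UNIV. \<Sum>a\<in>UNIV. ?V s * p s a * P s a s')) * PiOp p f s' = (?V s' - mu0 s') * PiOp p f s'"
      using Vf_eq[OF assms, of s'] by simp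
  qed
  finally show ?thesis by (simp add: left_diff_distrib sum_subtractf)
qed

lemma E_eq:
  assumes "is_mdp P mu0 \<gamma>" "is_policy p"
  shows "(\<Sum>s\<in>UNIV. \<Sum>a\<in>UNIV. dvisit P mu0 \<gamma> p s a * residual P \<gamma> r p qphi s a)
     = Jobj P mu0 \<gamma> r p - Jpi mu0 \<gamma> p qphi"
proof -
  let ?V = "Vf P mu0 \<gamma> p"
  let ?q = "qfun P \<gamma> r p"
  have pr: "PiOp p (residual P \<gamma> r p qphi) s
     = (PiOp p ?q s - \<gamma> * PiOp p (PPiOp P p ?q) s) - (PiOp p qphi s - \<gamma> * PiOp p (PPiOp P p qphi) s)" for s
  proof -
    have "PiOp p (residual P \<gamma> r p qphi) s
       = (\<Sum>a\<in>UNIV. p s a * (?q s a - \<gamma> * PPiOp P p ?q s a) - (p s a * qphi s a - \<gamma> * (p s a * PPiOp P p qphi s a)))"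
      unfolding PiOp_def residual_def
      by (intro sum.cong refl) (subst q_bellman[OF assms], simp add: algebra_simps)
    then show ?thesis
      by (simp add: PiOp_def sum_subtractf sum_distrib_left right_diff_distrib mult_ac)
  qed
  have "(\<Sum>s\<in>UNIV. \<Sum>a\<in>UNIV. dvisit P mu0 \<gamma> p s a * residual P \<gamma> r p qphi s a)
     = (1 - \<gamma>) * (\<Sum>s\<in>UNIV. ?V s * PiOp p (residual P \<gamma> r p qphi) s)"
    by (simp add: dvisit_Vf[OF assms] PiOp_def sum_distrib_left mult_ac)
  also have "\<dots> = (1 - \<gamma>) * (((\<Sum>s\<in>UNIV. ?V s * PiOp p ?q s) - \<gamma> * (\<Sum>s\<in>UNIV. ?V s * PiOp p (PPiOp P p ?q) s))
      - ((\<Sum>s\<in>UNIV. ?V s * PiOp p qphi s) - \<gamma> * (\<Sum>s\<in>UNIV. ?V s * PiOp p (PPiOp P p qphi) s)))"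
    by (simp add: pr sum_subtractf sum_distrib_left right_diff_distrib mult_ac)
  also have "\<dots> = (1 - \<gamma>) * ((\<Sum>s\<in>UNIV. mu0 s * PiOp p ?q s) - (\<Sum>s\<in>UNIV. mu0 s * PiOp p qphi s))"
    by (simp only: key_identity[OF assms])
  finally show ?thesis by (simp add: Jobj_def Jpi_def right_diff_distrib)
qed

lemma flow:
  assumes "is_mdp P mu0 \<gamma>" "is_policy p"
  shows "(\<Sum>s\<in>UNIV. \<Sum>a\<in>UNIV. dvisit P mu0 \<gamma> p s a * (\<gamma> * P s a s'))
     = dSvisit P mu0 \<gamma> p s' - (1 - \<gamma>) * mu0 s'"
proof -
  have "dSvisit P mu0 \<gamma> p s' = (1 - \<gamma>) * Vf P mu0 \<gamma> p s'"
    using assms(2) by (simp add: dSvisit_def dvisit_Vf[OF assms] is_policy_def flip: sum_distrib_left)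
  moreover have "(\<Sum>s\<in>UNIV. \<Sum>a\<in>UNIV. dvisit P mu0 \<gamma> p s a * (\<gamma> * P s a s'))
     = (1 - \<gamma>) * (\<gamma> * (\<Sum>s\<in>UNIV. \<Sum>a\<in>UNIV. Vf P mu0 \<gamma> p s * p s a * P s a s'))"
    by (simp add: dvisit_Vf[OF assms] sum_distrib_left mult_ac)
  ultimately show ?thesis using Vf_eq[OF assms, of s'] by (simp add: algebra_simps)
qed



definition Amat :: "('s::finite \<Rightarrow> 'a::finite \<Rightarrow> 's \<Rightarrow> real) \<Rightarrow> real \<Rightarrow> ('s \<Rightarrow> 'a \<Rightarrow> real) \<Rightarrow> real^'s^'s" where
  "Amat P \<gamma> p = (\<chi> i j. (if i = j then 1 else 0) - \<gamma> * (\<Sum>a\<in>UNIV. p j a * P j a i))"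

lemma Amat_V:
  assumes "is_mdp P mu0 \<gamma>" "is_policy p"
  shows "Amat P \<gamma> p *v (\<chi> s. Vf P mu0 \<gamma> p s) = (\<chi> s. mu0 s)"
proof -
  have "(\<Sum>j\<in>UNIV. ((if i = j then 1 else 0) - \<gamma> * (\<Sum>a\<in>UNIV. p j a * P j a i)) * Vf P mu0 \<gamma> p j) = mu0 i" for i
  proof -
    have "(\<Sum>j\<in>UNIV. ((if i = j then 1 else 0) - \<gamma> * (\<Sum>a\<in>UNIV. p j a * P j a i)) * Vf P mu0 \<gamma> p j)
       = Vf P mu0 \<gamma> p i - \<gamma> * (\<Sum>j\<in>UNIV. \<Sum>a\<in>UNIV. Vf P mu0 \<gamma> p j * p j a * P j a i)"
    proof -
      have "\<And>j. ((if i = j then 1 else 0) - \<gamma> * (\<Sum>a\<in>UNIV. p j a * P j a i)) * Vf P mu0 \<gamma> p j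
          = (if i = j then Vf P mu0 \<gamma> p j else 0) - \<gamma> * (\<Sum>a\<in>UNIV. Vf P mu0 \<gamma> p j * p j a * P j a i)"
        by (simp add: sum_distrib_left sum_distrib_right algebra_simps)
      then show ?thesis by (simp only: sum_subtractf flip: sum_distrib_left) simp
    qed
    then show ?thesis using Vf_eq[OF assms, of i] by simp
  qed
  then show ?thesis by (simp add: Amat_def matrix_vector_mult_def vec_eq_iff)
qed

lemma Amat_det:
  assumes "is_mdp P mu0 \<gamma>" "is_policy p"
  shows "det (Amat P \<gamma> p) \<noteq> 0"
proof -
  let ?M = "\<lambda>j i. \<Sum>a\<in>UNIV. p j a * P j a i"
  have g: "0 \<le> \<gamma>" "\<gamma> < 1" using assms by (auto simp: is_mdp_def)
  have Mnn: "0 \<le> ?M j i" for j i using assms by (auto simp: is_mdp_def is_policy_def intro!: sum_nonneg)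
  have Msum: "(\<Sum>i\<in>UNIV. ?M j i) = 1" for j
  proof -
    have "(\<Sum>i\<in>UNIV. ?M j i) = (\<Sum>a\<in>UNIV. p j a * (\<Sum>i\<in>UNIV. P j a i))"
      by (simp add: sum_distrib_left) (rule sum.swap)
    then show ?thesis using assms by (simp add: is_mdp_def is_policy_def)
  qed
  have zero: "y = 0" if y: "Amat P \<gamma> p *v y = 0" for y
  proof -
    have yi: "y $ i = \<gamma> * (\<Sum>j\<in>UNIV. ?M j i * y $ j)" for i
    proof -
      have "(\<Sum>j\<in>UNIV. ((if i = j then 1 else 0) - \<gamma> * ?M j i) * y $ j) = 0"
        using y by (simp add: Amat_def matrix_vector_mult_def vec_eq_iff)
      moreover have "(\<Sum>j\<in>UNIV. ((if i = j then 1 else 0) - \<gamma> * ?M j i) * y $ j)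
          = y $ i - \<gamma> * (\<Sum>j\<in>UNIV. ?M j i * y $ j)"
      proof -
        have "\<And>j. ((if i = j then 1 else 0) - \<gamma> * ?M j i) * y $ j
            = (if i = j then y $ j else 0) - \<gamma> * (?M j i * y $ j)"
          by (simp add: algebra_simps)
        then show ?thesis by (simp only: sum_subtractf flip: sum_distrib_left) simp
      qed
      ultimately show ?thesis by simp
    qed
    have "(\<Sum>i\<in>UNIV. \<bar>y $ i\<bar>) \<le> (\<Sum>i\<in>UNIV. \<gamma> * (\<Sum>j\<in>UNIV. ?M j i * \<bar>y $ j\<bar>))"
    proof (rule sum_mono)
      fix i
      have "\<bar>y $ i\<bar> = \<gamma> * \<bar>\<Sum>j\<in>UNIV. ?M j i * y $ j\<bar>" using g by (subst yi) (simp add: abs_mult)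
      also have "\<dots> \<le> \<gamma> * (\<Sum>j\<in>UNIV. ?M j i * \<bar>y $ j\<bar>)"
        using g Mnn by (intro mult_left_mono order.trans[OF sum_abs]) (auto simp: abs_mult)
      finally show "\<bar>y $ i\<bar> \<le> \<gamma> * (\<Sum>j\<in>UNIV. ?M j i * \<bar>y $ j\<bar>)" .
    qed
    also have "\<dots> = \<gamma> * (\<Sum>j\<in>UNIV. \<bar>y $ j\<bar> * (\<Sum>i\<in>UNIV. ?M j i))"
      by (simp add: sum_distrib_left sum_distrib_right mult_ac) (rule sum.swap)
    also have "\<dots> = \<gamma> * (\<Sum>j\<in>UNIV. \<bar>y $ j\<bar>)" by (simp add: Msum)
    finally have "(1 - \<gamma>) * (\<Sum>i\<in>UNIV. \<bar>y $ i\<bar>) \<le> 0" by (simp add: algebra_simps)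
    then have "(\<Sum>i\<in>UNIV. \<bar>y $ i\<bar>) \<le> 0" using g by (simp add: mult_le_0_iff)
    then have "(\<Sum>i\<in>UNIV. \<bar>y $ i\<bar>) = 0" by (simp add: order_antisym sum_nonneg)
    then have "\<forall>i. \<bar>y $ i\<bar> = 0" by (simp add: sum_nonneg_eq_0_iff)
    then show ?thesis by (simp add: vec_eq_iff)
  qed
  have "inj ((*v) (Amat P \<gamma> p))"
  proof (rule injI)
    fix x y assume "Amat P \<gamma> p *v x = Amat P \<gamma> p *v y"
    then have "Amat P \<gamma> p *v (x - y) = 0" by (simp add: matrix_vector_mult_diff_distrib)
    then show "x = y" using zero[of "x - y"] by simp
  qed
  then show ?thesis
    by (simp add: invertible_det_nz[symmetric] invertible_left_inverse matrix_left_invertible_injective)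
qed

lemma V_cramer:
  assumes "is_mdp P mu0 \<gamma>" "is_policy p"
  shows "Vf P mu0 \<gamma> p k = det ((\<chi> i j. if j = k then mu0 i else Amat P \<gamma> p $ i $ j)) / det (Amat P \<gamma> p)"
proof -
  have "det ((\<chi> i j. if j = k then mu0 i else Amat P \<gamma> p $ i $ j)) = Vf P mu0 \<gamma> p k * det (Amat P \<gamma> p)"
    using cramer_lemma[of k "Amat P \<gamma> p" "\<chi> s. Vf P mu0 \<gamma> p s"] unfolding Amat_V[OF assms] by (simp cong: if_cong)
  then show ?thesis using Amat_det[OF assms] by simp
qed

lemma differentiable_prod_real:
  fixes f :: "'i \<Rightarrow> 'p::real_normed_vector \<Rightarrow> real"
  shows "finite I \<Longrightarrow> (\<And>i. i \<in> I \<Longrightarrow> f i differentiable (at x)) \<Longrightarrow> (\<lambda>t. \<Prod>i\<in>I. f i t) differentiable (at x)"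
  by (induction I rule: finite_induct) (auto intro!: differentiable_mult)

lemma det_differentiable:
  fixes M :: "'p::real_normed_vector \<Rightarrow> real^'n^'n"
  assumes "\<And>i j. (\<lambda>t. M t $ i $ j) differentiable (at x)"
  shows "(\<lambda>t. det (M t)) differentiable (at x)"
  unfolding det_def
  by (intro differentiable_sum ballI differentiable_mult differentiable_const differentiable_prod_real assms) auto



theorem theorem1:
  fixes P :: "'s::finite \<Rightarrow> 'a::finite \<Rightarrow> 's \<Rightarrow> real"
    and mu0 :: "'s \<Rightarrow> real" and \<gamma> :: real and r :: "'s \<Rightarrow> 'a \<Rightarrow> real"
    and pi :: "'p::euclidean_space \<Rightarrow> 's \<Rightarrow> 'a \<Rightarrow> real"
    and qphi :: "'s \<Rightarrow> 'a \<Rightarrow> real"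
    and \<theta> :: 'p
    and Dpi :: "'s \<Rightarrow> 'a \<Rightarrow> 'p \<Rightarrow> real"
  assumes mdp: "is_mdp P mu0 \<gamma>"
    and pol: "\<And>t. is_policy (pi t)"
    and diff: "\<And>t s a. (\<lambda>u. pi u s a) differentiable (at t)"
    and Dpi: "\<And>s a. ((\<lambda>u. pi u s a) has_derivative Dpi s a) (at \<theta>)"
  shows "\<exists>DJ DJpi DE Dd.
     ((\<lambda>t. Jobj P mu0 \<gamma> r (pi t)) has_derivative DJ) (at \<theta>)
   \<and> ((\<lambda>t. Jpi mu0 \<gamma> (pi t) qphi) has_derivative DJpi) (at \<theta>)
   \<and> ((\<lambda>t. \<Sum>s\<in>UNIV. \<Sum>a\<in>UNIV. dvisit P mu0 \<gamma> (pi t) s a * residual P \<gamma> r (pi t) qphi s a)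
        has_derivative DE) (at \<theta>)
   \<and> (\<forall>s a. ((\<lambda>t. dvisit P mu0 \<gamma> (pi t) s a) has_derivative Dd s a) (at \<theta>))
   \<and> (\<forall>h. DJ h - DJpi h = DE h)
   \<and> (\<forall>h. DJ h - (\<Sum>s\<in>UNIV. dSvisit P mu0 \<gamma> (pi \<theta>) s * (\<Sum>a\<in>UNIV. qphi s a * Dpi s a h))
          = (\<Sum>s\<in>UNIV. \<Sum>a\<in>UNIV. Dd s a h * residual P \<gamma> r (pi \<theta>) qphi s a))"
  proof -
  have g: "0 \<le> \<gamma>" "\<gamma> < 1" using mdp by (auto simp: is_mdp_def)
  have Aent: "(\<lambda>t. Amat P \<gamma> (pi t) $ i $ j) differentiable (at \<theta>)" for i j
  proof -
    have "(\<lambda>t. Amat P \<gamma> (pi t) $ i $ j) = (\<lambda>t. (if i = j then 1 else 0) - \<gamma> * (\<Sum>a\<in>UNIV. pi t j a * P j a i))"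
      by (simp add: Amat_def)
    moreover have "(\<lambda>t. (if i = j then 1 else 0) - \<gamma> * (\<Sum>a\<in>UNIV. pi t j a * P j a i)) differentiable (at \<theta>)"
      by (intro differentiable_diff differentiable_const differentiable_mult differentiable_sum ballI diff) auto
    ultimately show ?thesis by simp
  qed
  have Vdiff: "(\<lambda>t. Vf P mu0 \<gamma> (pi t) s) differentiable (at \<theta>)" for s
  proof -
    have "(\<lambda>t. Vf P mu0 \<gamma> (pi t) s) = (\<lambda>t. det (\<chi> i j. if j = s then mu0 i else Amat P \<gamma> (pi t) $ i $ j) / det (Amat P \<gamma> (pi t)))"
      using V_cramer[OF mdp pol] by blast
    moreover have "(\<lambda>t. det (\<chi> i j. if j = s then mu0 i else Amat P \<gamma> (pi t) $ i $ j) / det (Amat P \<gamma> (pi t))) differentiable (at \<theta>)"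
      apply (intro differentiable_divide det_differentiable Amat_det[OF mdp pol])
      subgoal for i j by (cases "j = s") (simp_all add: Aent)
      subgoal for i j by (rule Aent)
      done
    ultimately show ?thesis by simp
  qed
  have "\<forall>s a. \<exists>D. ((\<lambda>t. dvisit P mu0 \<gamma> (pi t) s a) has_derivative D) (at \<theta>)"
  proof (intro allI)
    fix s a
    have "(\<lambda>t. dvisit P mu0 \<gamma> (pi t) s a) = (\<lambda>t. (1 - \<gamma>) * Vf P mu0 \<gamma> (pi t) s * pi t s a)"
      using dvisit_Vf[OF mdp pol] by blast
    moreover have "(\<lambda>t. (1 - \<gamma>) * Vf P mu0 \<gamma> (pi t) s * pi t s a) differentiable (at \<theta>)"
      by (intro differentiable_mult differentiable_const Vdiff diff)
    ultimately show "\<exists>D. ((\<lambda>t. dvisit P mu0 \<gamma> (pi t) s a) has_derivative D) (at \<theta>)"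
      unfolding differentiable_def by simp
  qed
  then obtain Dd where Dd: "\<And>s a. ((\<lambda>t. dvisit P mu0 \<gamma> (pi t) s a) has_derivative Dd s a) (at \<theta>)"
    by metis
  have lin: "((\<lambda>t. \<Sum>s\<in>UNIV. \<Sum>a\<in>UNIV. c s a * pi t s a) has_derivative (\<lambda>h. \<Sum>s\<in>UNIV. \<Sum>a\<in>UNIV. c s a * Dpi s a h)) (at \<theta>)" for c
    by (intro has_derivative_sum has_derivative_mult_right Dpi)
  define Dres where "Dres s a h = (\<Sum>s'\<in>UNIV. \<Sum>a'\<in>UNIV. (\<gamma> * P s a s' * qphi s' a') * Dpi s' a' h)" for s a h
  have res_form: "residual P \<gamma> r (pi t) qphi s a = (\<Sum>s'\<in>UNIV. \<Sum>a'\<in>UNIV. (\<gamma> * P s a s' * qphi s' a') * pi t s' a') + (r s a - qphi s a)" for t s a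
    by (simp add: residual_def PPiOp_def PiOp_def sum_distrib_left mult_ac)
  have Dres: "((\<lambda>t. residual P \<gamma> r (pi t) qphi s a) has_derivative Dres s a) (at \<theta>)" for s a
    unfolding res_form Dres_def by (intro has_derivative_add_const lin)
  define DJpi where "DJpi h = (\<Sum>s\<in>UNIV. \<Sum>a\<in>UNIV. ((1 - \<gamma>) * mu0 s * qphi s a) * Dpi s a h)" for h
  have Jpi_form: "Jpi mu0 \<gamma> (pi t) qphi = (\<Sum>s\<in>UNIV. \<Sum>a\<in>UNIV. ((1 - \<gamma>) * mu0 s * qphi s a) * pi t s a)" for t
    by (simp add: Jpi_def PiOp_def sum_distrib_left mult_ac)
  have DJpi: "((\<lambda>t. Jpi mu0 \<gamma> (pi t) qphi) has_derivative DJpi) (at \<theta>)"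
    unfolding Jpi_form DJpi_def by (rule lin)
  define DE where "DE h = (\<Sum>s\<in>UNIV. \<Sum>a\<in>UNIV. dvisit P mu0 \<gamma> (pi \<theta>) s a * Dres s a h + Dd s a h * residual P \<gamma> r (pi \<theta>) qphi s a)" for h
  have DE: "((\<lambda>t. \<Sum>s\<in>UNIV. \<Sum>a\<in>UNIV. dvisit P mu0 \<gamma> (pi t) s a * residual P \<gamma> r (pi t) qphi s a) has_derivative DE) (at \<theta>)"
    unfolding DE_def by (intro has_derivative_sum has_derivative_mult Dd Dres)
  define DJ where "DJ h = DE h + DJpi h" for h
  have J_form: "(\<lambda>t. Jobj P mu0 \<gamma> r (pi t)) = (\<lambda>t. (\<Sum>s\<in>UNIV. \<Sum>a\<in>UNIV. dvisit P mu0 \<gamma> (pi t) s a * residual P \<gamma> r (pi t) qphi s a) + Jpi mu0 \<gamma> (pi t) qphi)"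
    using E_eq[OF mdp pol] by simp
  have DJ: "((\<lambda>t. Jobj P mu0 \<gamma> r (pi t)) has_derivative DJ) (at \<theta>)"
    unfolding J_form DJ_def[abs_def] by (intro has_derivative_add DE DJpi)
  have ident2: "DJ h - (\<Sum>s\<in>UNIV. dSvisit P mu0 \<gamma> (pi \<theta>) s * (\<Sum>a\<in>UNIV. qphi s a * Dpi s a h))
          = (\<Sum>s\<in>UNIV. \<Sum>a\<in>UNIV. Dd s a h * residual P \<gamma> r (pi \<theta>) qphi s a)" for h
  proof -
    let ?d = "dvisit P mu0 \<gamma> (pi \<theta>)"
    let ?X = "\<lambda>s'. \<Sum>a'\<in>UNIV. qphi s' a' * Dpi s' a' h"
    have A: "(\<Sum>s\<in>UNIV. \<Sum>a\<in>UNIV. ?d s a * Dres s a h)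
        = (\<Sum>s'\<in>UNIV. (\<Sum>s\<in>UNIV. \<Sum>a\<in>UNIV. ?d s a * (\<gamma> * P s a s')) * ?X s')"
    proof -
      have "(\<Sum>s\<in>UNIV. \<Sum>a\<in>UNIV. ?d s a * Dres s a h)
          = (\<Sum>s\<in>UNIV. \<Sum>a\<in>UNIV. \<Sum>s'\<in>UNIV. ?d s a * (\<gamma> * P s a s') * ?X s')"
        by (simp add: Dres_def sum_distrib_left mult_ac)
      also have "\<dots> = (\<Sum>s'\<in>UNIV. \<Sum>s\<in>UNIV. \<Sum>a\<in>UNIV. ?d s a * (\<gamma> * P s a s') * ?X s')"
        by (rule swap3)
      also have "\<dots> = (\<Sum>s'\<in>UNIV. (\<Sum>s\<in>UNIV. \<Sum>a\<in>UNIV. ?d s a * (\<gamma> * P s a s')) * ?X s')"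
        by (simp add: sum_distrib_right)
      finally show ?thesis .
    qed
    also have "\<dots> = (\<Sum>s'\<in>UNIV. (dSvisit P mu0 \<gamma> (pi \<theta>) s' - (1 - \<gamma>) * mu0 s') * ?X s')"
      by (simp add: flow[OF mdp pol])
    finally have A': "(\<Sum>s\<in>UNIV. \<Sum>a\<in>UNIV. ?d s a * Dres s a h)
        = (\<Sum>s'\<in>UNIV. dSvisit P mu0 \<gamma> (pi \<theta>) s' * ?X s') - (\<Sum>s'\<in>UNIV. (1 - \<gamma>) * mu0 s' * ?X s')"
      by (simp add: left_diff_distrib sum_subtractf)
    have B: "DJpi h = (\<Sum>s'\<in>UNIV. (1 - \<gamma>) * mu0 s' * ?X s')"
      by (simp add: DJpi_def sum_distrib_left mult_ac)
    show ?thesis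
      unfolding DJ_def DE_def using A' B by (simp add: sum.distrib)
  qed
  show ?thesis
    apply (rule exI[of _ DJ], rule exI[of _ DJpi], rule exI[of _ DE], rule exI[of _ Dd])
    using DJ DJpi DE Dd ident2 by (simp add: DJ_def)
qed

end
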